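(* In the setting described in the context (the run $\Omega$ generated by the counterstrategy $\mathcal{E}$), every politeral unit has at most one opposite politeral unit.
   Context: Formulas are built from atoms by $\neg$ (on atoms only), binary $\wedge,\vee$ and unary $!$ (branching recurrence) and $?$ (branching corecurrence). Units. Fix a formula $\mathbb{F}_0$. Oformulas are occurrences of subformulas of $\mathbb{F}_0$. Politerals are occurrences of literals $P$ or $\neg P$ not in the scope of $\neg$. The modal depth of an oformula is the number of its proper superoccurrences of the form $!E$ or $?E$. A unit is $E[\vec x]$, with $E$ an oformula and $\vec x$ a tuple of infinite bitstrings of length equal to the modal depth of $E$. Parenthood: $G_i[\vec x]$ ($i=0,1$) are the children of $(G_0\wedge G_1)[\vec x]$ and of $(G_0\vee G_1)[\vec x]$; the units $G[\vec x,y]$ for all infinite bitstrings $y$ are the children of $!G[\vec x]$ and of $?G[\vec x]$. The $\mathbb{F}_0$-origin $\tilde E$ of $E[\vec x]$ is $E$. A politeral unit is one whose origin is a politeral. Funits. A funit is $E[\vec w]$ with $\vec w$ a tuple of finite bitstrings of length equal to the modal depth of $E$. Funits have the analogous parenthood relation, with children $G[\vec w,u]$ for finite bitstrings $u$. Addresses: the address of $\mathbb{F}_0[\,]$ is the empty string; if $\alpha$ is the address of $E[\vec w]$, then $G_i[\vec w]$ has address $\alpha i.$ (the bit $i$ followed by a period), and $G[\vec w,u]$ has address $\alpha u.$. A funit $E[w_1,\dots,w_n]$ is a funital restriction of the unit $E[x_1,\dots,x_n]$ iff each $w_j$ is a prefix of $x_j$. Its height is $\max_j|w_j|$ (or $0$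 if $n=0$), and it is regular iff all $w_j$ have the same length. Making the numeric move $a$ (a decimal numeral) in a politeral funit with address $\alpha$ means making the move $\alpha a$. A move made in a funit counts as made in every unital extension of it. Runs and projections. For a run $\Theta$ (a sequence of labmoves $\wp\beta$, $\wp\in\{\top,\bot\}$) and a string $\alpha$, $\Theta^\alpha$ keeps the labmoves whose move begins with $\alpha$ and deletes that prefix. For an infinite bitstring $y$, $\Theta^{\preceq y}$ keeps the labmoves $\wp\,u.\beta$ with $u$ a finite prefix of $y$ and deletes "$u.$". The projection of a run $\Omega$ on $\mathbb{F}_0[\,]$ is $\Omega$. If $\Theta$ is the projection on $E[\vec x]$, then the projection on the child $G_i[\vec x]$ of a $\wedge$/$\vee$-unit is $\Theta^{i.}$, and on the child $G[\vec x,y]$ of a $!$/$?$-unit it is $\Theta^{\preceq y}$. The run $\Omega$. For a position $\Phi$, a funit is $\Phi$-active iff $\Phi$ contains some move (by either player) of the form $\alpha\beta$ with $\alpha$ its address. A $\Phi$-prompt is a regular politeral funit $L[\vec w]$ such that either $\vec w$ is empty, or its height equals the least integer exceeding the heights of all $\Phi$-active funits. $\Omega$ is an infinite run produced by a play proceeding in rounds $1,2,3,\dots$. At the start of each round, with $\Phi$ the current position, player $\bot$ (the counterstrategy $\mathcal{E}$) lists all $\Phi$-prompts $L_1[\vec w_1],\dots,L_n[\vec w_n]$ in lexicographic order. Then, for $i=1,\dots,n$ in turn, $\bot$ makes the numeric move $a$ in $L_i[\vec w_i]$, where $a$ is the least natural number not yet made as a numeric move in any politeral funit by either player. After this, the adversary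 $\top$ (an arbitrary HPM) makes at most one move. It is assumed that $\Omega$ is legal: every move in it, by either player, has the form $\alpha a$ with $\alpha$ the address of a politeral funit and $a$ a decimal numeral. Opposite. Politeral units $L,M$ are opposite iff $\tilde L,\tilde M$ are literals one of which is the negation of the other and, for each $\wp\in\{\top,\bot\}$, the set of $\wp$-labeled moves in the projection of $\Omega$ on $L$ equals the set of $\neg\wp$-labeled moves in the projection of $\Omega$ on $M$. *)

theory Defs
  imports Main "HOL-Library.Char_ord" "HOL-Library.List_Lexorder"
begin

text \<open>Literals: Lit True P is the atom P, Lit False P is its negation.
  Negation is applied to atoms only.\<close>
datatype 'a fmla =
    Lit bool 'a
  | Conj "'a fmla" "'a fmla"
  | Disj "'a fmla" "'a fmla"
  | Bang "'a fmla"
  | Ques "'a fmla"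

text \<open>Oformulas (occurrences of subformulas of F0) are represented by paths:
  0/1 selects the left/right conjunct/disjunct, 0 selects the unique child of a
  !- or ?-node.\<close>
type_synonym path = "nat list"

fun sub :: "'a fmla \<Rightarrow> path \<Rightarrow> 'a fmla option" where
  "sub F [] = Some F"
| "sub (Conj A B) (0 # p) = sub A p"
| "sub (Conj A B) (Suc 0 # p) = sub B p"
| "sub (Disj A B) (0 # p) = sub A p"
| "sub (Disj A B) (Suc 0 # p) = sub B p"
| "sub (Bang A) (0 # p) = sub A p"
| "sub (Ques A) (0 # p) = sub A p"
| "sub _ _ = None"

fun mdepth :: "'a fmla \<Rightarrow> path \<Rightarrow> nat" where
  "mdepth (Conj A B) (0 # p) = mdepth A p"
| "mdepth (Conj A B) (Suc 0 # p) = mdepth B p"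
| "mdepth (Disj A B) (0 # p) = mdepth A p"
| "mdepth (Disj A B) (Suc 0 # p) = mdepth B p"
| "mdepth (Bang A) (0 # p) = Suc (mdepth A p)"
| "mdepth (Ques A) (0 # p) = Suc (mdepth A p)"
| "mdepth _ _ = 0"

definition is_occ :: "'a fmla \<Rightarrow> path \<Rightarrow> bool" where
  "is_occ F p \<longleftrightarrow> sub F p \<noteq> None"

definition is_politeral :: "'a fmla \<Rightarrow> path \<Rightarrow> bool" where
  "is_politeral F p \<longleftrightarrow> (\<exists>b P. sub F p = Some (Lit b P))"

text \<open>Infinite bitstrings: nat \<Rightarrow> bool; finite bitstrings: bool list.\<close>
type_synonym ibits = "nat \<Rightarrow> bool"

definition is_unit :: "'a fmla \<Rightarrow> path \<times> ibits list \<Rightarrow> bool" where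
  "is_unit F u \<longleftrightarrow> is_occ F (fst u) \<and> length (snd u) = mdepth F (fst u)"

definition is_funit :: "'a fmla \<Rightarrow> path \<times> bool list list \<Rightarrow> bool" where
  "is_funit F f \<longleftrightarrow> is_occ F (fst f) \<and> length (snd f) = mdepth F (fst f)"

definition politeral_unit :: "'a fmla \<Rightarrow> path \<times> ibits list \<Rightarrow> bool" where
  "politeral_unit F u \<longleftrightarrow> is_unit F u \<and> is_politeral F (fst u)"

definition politeral_funit :: "'a fmla \<Rightarrow> path \<times> bool list list \<Rightarrow> bool" where
  "politeral_funit F f \<longleftrightarrow> is_funit F f \<and> is_politeral F (fst f)"

definition bchar :: "bool \<Rightarrow> char" where
  "bchar b = (if b then CHR ''1'' else CHR ''0'')"

fun faddr :: "'a fmla \<Rightarrow> path \<Rightarrow> bool list list \<Rightarrow> string" where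
  "faddr (Conj A B) (0 # p) ws = ''0.'' @ faddr A p ws"
| "faddr (Conj A B) (Suc 0 # p) ws = ''1.'' @ faddr B p ws"
| "faddr (Disj A B) (0 # p) ws = ''0.'' @ faddr A p ws"
| "faddr (Disj A B) (Suc 0 # p) ws = ''1.'' @ faddr B p ws"
| "faddr (Bang A) (0 # p) (w # ws) = map bchar w @ ''.'' @ faddr A p ws"
| "faddr (Ques A) (0 # p) (w # ws) = map bchar w @ ''.'' @ faddr A p ws"
| "faddr _ _ _ = []"

definition addr :: "'a fmla \<Rightarrow> path \<times> bool list list \<Rightarrow> string" where
  "addr F f = faddr F (fst f) (snd f)"

definition height :: "bool list list \<Rightarrow> nat" where
  "height ws = foldr max (map length ws) 0"

definition regular :: "bool list list \<Rightarrow> bool" where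
  "regular ws \<longleftrightarrow> (\<forall>w\<in>set ws. \<forall>v\<in>set ws. length w = length v)"

datatype player = Top | Bot

fun neg_player :: "player \<Rightarrow> player" where
  "neg_player Top = Bot" | "neg_player Bot = Top"

type_synonym labmove = "player \<times> string"

text \<open>A (possibly infinite) run, or a projection of one, is represented as a
  sequence nat \<Rightarrow> labmove option: deleted labmoves are None (the
  order of the remaining labmoves is preserved).\<close>
type_synonym run = "nat \<Rightarrow> labmove option"

function dec :: "nat \<Rightarrow> string" where
  "dec n = (if n < 10 then [char_of (48 + n)]
            else dec (n div 10) @ [char_of (48 + n mod 10)])"
  by auto
termination by (relation "measure id") auto

definition proj_pref :: "string \<Rightarrow> run \<Rightarrow> run" where
  "proj_pref \<alpha> \<Theta> n = (case \<Theta> n of None \<Rightarrow> None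
     | Some (q, m) \<Rightarrow> if take (length \<alpha>) m = \<alpha> then Some (q, drop (length \<alpha>) m) else None)"

text \<open>Theta^{<=y}: keep labmoves u.beta with u a finite prefix of y; delete "u.".\<close>
definition proj_inf :: "ibits \<Rightarrow> run \<Rightarrow> run" where
  "proj_inf y \<Theta> n = (case \<Theta> n of None \<Rightarrow> None
     | Some (q, m) \<Rightarrow>
         (let k = length (takeWhile (\<lambda>c. c \<noteq> CHR ''.'') m) in
          if k < length m \<and> take k m = map bchar (map y [0..<k])
          then Some (q, drop (Suc k) m) else None))"

text \<open>Projection of a run on a unit E[xs] (given by path and tuple of infinite bitstrings).\<close>
fun proj :: "'a fmla \<Rightarrow> path \<Rightarrow> ibits list \<Rightarrow> run \<Rightarrow> run" where
  "proj (Conj A B) (0 # p) xs \<Theta> = proj A p xs (proj_pref ''0.'' \<Theta>)"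
| "proj (Conj A B) (Suc 0 # p) xs \<Theta> = proj B p xs (proj_pref ''1.'' \<Theta>)"
| "proj (Disj A B) (0 # p) xs \<Theta> = proj A p xs (proj_pref ''0.'' \<Theta>)"
| "proj (Disj A B) (Suc 0 # p) xs \<Theta> = proj B p xs (proj_pref ''1.'' \<Theta>)"
| "proj (Bang A) (0 # p) (y # xs) \<Theta> = proj A p xs (proj_inf y \<Theta>)"
| "proj (Ques A) (0 # p) (y # xs) \<Theta> = proj A p xs (proj_inf y \<Theta>)"
| "proj _ _ _ \<Theta> = \<Theta>"

definition moves_of :: "player \<Rightarrow> run \<Rightarrow> string set" where
  "moves_of q \<Theta> = {m. \<exists>n. \<Theta> n = Some (q, m)}"

type_synonym position = "labmove list"

definition active :: "'a fmla \<Rightarrow> position \<Rightarrow> path \<times> bool list list \<Rightarrow> bool" where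
  "active F \<Phi> f \<longleftrightarrow> is_funit F f \<and> (\<exists>q \<beta>. (q, addr F f @ \<beta>) \<in> set \<Phi>)"

definition prompt_height :: "'a fmla \<Rightarrow> position \<Rightarrow> nat" where
  "prompt_height F \<Phi> = (LEAST h. \<forall>f. active F \<Phi> f \<longrightarrow> height (snd f) < h)"

definition is_prompt :: "'a fmla \<Rightarrow> position \<Rightarrow> path \<times> bool list list \<Rightarrow> bool" where
  "is_prompt F \<Phi> f \<longleftrightarrow> politeral_funit F f \<and> regular (snd f) \<and>
     (snd f = [] \<or> height (snd f) = prompt_height F \<Phi>)"

definition prompt_addrs :: "'a fmla \<Rightarrow> position \<Rightarrow> string list" where
  "prompt_addrs F \<Phi> = sorted_list_of_set (addr F ` {f. is_prompt F \<Phi> f})"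

definition used_nums :: "'a fmla \<Rightarrow> position \<Rightarrow> nat set" where
  "used_nums F \<Phi> = {a. \<exists>q f. politeral_funit F f \<and> (q, addr F f @ dec a) \<in> set \<Phi>}"

fun bot_moves :: "'a fmla \<Rightarrow> position \<Rightarrow> string list \<Rightarrow> position" where
  "bot_moves F \<Phi> [] = \<Phi>"
| "bot_moves F \<Phi> (\<alpha> # \<alpha>s) =
     bot_moves F (\<Phi> @ [(Bot, \<alpha> @ dec (LEAST a. a \<notin> used_nums F \<Phi>))]) \<alpha>s"

text \<open>Position after k rounds, given the adversary's choices t (at most one
  move per round, made after the counterstrategy's moves of that round).\<close>
fun pos_after :: "'a fmla \<Rightarrow> (nat \<Rightarrow> string option) \<Rightarrow> nat \<Rightarrow> position" where
  "pos_after F t 0 = []"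
| "pos_after F t (Suc k) =
     (let \<Phi>' = bot_moves F (pos_after F t k) (prompt_addrs F (pos_after F t k))
      in \<Phi>' @ (case t k of None \<Rightarrow> [] | Some m \<Rightarrow> [(Top, m)]))"

definition generated_run :: "'a fmla \<Rightarrow> (nat \<Rightarrow> labmove) \<Rightarrow> bool" where
  "generated_run F \<Omega> \<longleftrightarrow> (\<exists>t. \<forall>k n. n < length (pos_after F t k) \<longrightarrow> \<Omega> n = pos_after F t k ! n)"

definition legal_run :: "'a fmla \<Rightarrow> (nat \<Rightarrow> labmove) \<Rightarrow> bool" where
  "legal_run F \<Omega> \<longleftrightarrow> (\<forall>n. \<exists>f a. politeral_funit F f \<and> snd (\<Omega> n) = addr F f @ dec a)"

definition unit_proj :: "'a fmla \<Rightarrow> (nat \<Rightarrow> labmove) \<Rightarrow> path \<times> ibits list \<Rightarrow> run" where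
  "unit_proj F \<Omega> u = proj F (fst u) (snd u) (\<lambda>n. Some (\<Omega> n))"

definition opposite :: "'a fmla \<Rightarrow> (nat \<Rightarrow> labmove) \<Rightarrow> path \<times> ibits list \<Rightarrow> path \<times> ibits list \<Rightarrow> bool" where
  "opposite F \<Omega> L M \<longleftrightarrow> politeral_unit F L \<and> politeral_unit F M \<and>
     (\<exists>b P. sub F (fst L) = Some (Lit b P) \<and> sub F (fst M) = Some (Lit (\<not> b) P)) \<and>
     (\<forall>q. moves_of q (unit_proj F \<Omega> L) = moves_of (neg_player q) (unit_proj F \<Omega> M))"

end

theory Submission
  imports Defs
begin

lemma dec_nonempty: "dec n \<noteq> []"
  by (subst dec.simps) simp

lemma dec_nodot: "CHR ''.'' \<notin> set (dec n)"
proof (induction n rule: dec.induct)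
  case (1 n)
  have c: "char_of (48 + d) \<noteq> CHR ''.''" if "d < 10" for d :: nat
  proof
    assume "char_of (48 + d) = CHR ''.''"
    then have "of_char (char_of (48 + d)) = (of_char CHR ''.'' :: nat)" by simp
    then show False using that by simp
  qed
  show ?case
  proof (cases "n < 10")
    case True then show ?thesis using c[of n] by (subst dec.simps) auto
  next
    case False
    then have "dec n = dec (n div 10) @ [char_of (48 + n mod 10)]" by (subst dec.simps) simp
    then show ?thesis using c[of "n mod 10"] 1 False by auto
  qed
qed

lemma char_dig_inj: "(a::nat) < 10 \<Longrightarrow> (b::nat) < 10 \<Longrightarrow> char_of (48 + a) = (char_of (48 + b) :: char) \<Longrightarrow> a = b"
proof -
  assume "a < 10" "b < 10" "char_of (48 + a) = (char_of (48 + b) :: char)"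
  then have "of_char (char_of (48 + a) :: char) = (of_char (char_of (48 + b) :: char) :: nat)" by simp
  then show "a = b" using \<open>a<10\<close> \<open>b<10\<close> by simp
qed

lemma dec_inj: "dec a = dec b \<Longrightarrow> a = b"
proof (induction a arbitrary: b rule: less_induct)
  case (less a)
  show ?case
  proof (cases "a < 10")
    case True
    note at = True
    show ?thesis
    proof (cases "b < 10")
      case True then show ?thesis using at less.prems
        by (subst (asm) (1 2) dec.simps) (auto intro: char_dig_inj)
    next
      case False then show ?thesis using at less.prems dec_nonempty[of "b div 10"]
        by (subst (asm) (1 2) dec.simps) (auto simp: Cons_eq_append_conv)
    qed
  next
    case False
    note af = False
    show ?thesis
    proof (cases "b < 10")
      case True then show ?thesis using af less.prems dec_nonempty[of "a div 10"]
        by (subst (asm) (1 2) dec.simps) (auto simp: append_eq_Cons_conv)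
    next
      case False
      then have e: "dec (a div 10) = dec (b div 10)" "char_of (48 + a mod 10) = (char_of (48 + b mod 10) :: char)"
        using af less.prems by (subst (asm) (1 2) dec.simps; simp)+
      have "a div 10 = b div 10" using less.IH[OF _ e(1)] af by simp
      moreover have "a mod 10 = b mod 10" using char_dig_inj[OF _ _ e(2)] by simp
      ultimately show ?thesis by (metis div_mult_mod_eq)
    qed
  qed
qed

lemma split_last_dot:
  assumes "xs @ c # ys = xs' @ c # ys'" "c \<notin> set ys" "c \<notin> set ys'"
  shows "ys = ys'"
proof -
  have "rev ys @ c # rev xs = rev ys' @ c # rev xs'" using assms(1)
    by (metis append.assoc append_Cons append_Nil rev.simps(2) rev_append)
  then have "takeWhile (\<lambda>x. x \<noteq> c) (rev ys @ c # rev xs) = takeWhile (\<lambda>x. x \<noteq> c) (rev ys' @ c # rev xs')" by simp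
  then have "rev ys = rev ys'" using assms(2,3) by (subst (asm) (1 2) takeWhile_append2) auto
  then show ?thesis by simp
qed

lemma faddr_Nil[simp]: "faddr F [] ws = []"
  by (cases F; cases ws) auto

lemma mdepth_Nil[simp]: "mdepth F [] = 0"
  by (cases F) auto

lemma proj_Nil[simp]: "proj F [] ys \<Theta> = \<Theta>"
  by (cases F; cases ys) auto

lemma sub_Cons_E:
  assumes "sub F (x#p) \<noteq> None"
  obtains (C0) A B where "F = Conj A B" "x = 0"
  | (C1) A B where "F = Conj A B" "x = 1"
  | (D0) A B where "F = Disj A B" "x = 0"
  | (D1) A B where "F = Disj A B" "x = 1"
  | (B) A where "F = Bang A" "x = 0"
  | (Q) A where "F = Ques A" "x = 0"
  using assms
  apply (cases F)
  apply simp
  apply (cases x rule: nat.exhaust; rename_tac n; case_tac n; simp)+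
  done

lemma ex_snoc_Cons: "\<exists>s. xs = s @ [c] \<Longrightarrow> \<exists>s. a # xs = s @ [c]"
  by (metis append_Cons)

lemma faddr_dot:
  "sub F p \<noteq> None \<Longrightarrow> length ws = mdepth F p \<Longrightarrow> p \<noteq> [] \<Longrightarrow>
   \<exists>s. faddr F p ws = s @ [CHR ''.'']"
proof (induction p arbitrary: F ws)
  case Nil then show ?case by simp
next
  case (Cons x p)
  from Cons.prems(1) show ?case
  proof (cases rule: sub_Cons_E)
    case (C0 A B) then show ?thesis using Cons.prems Cons.IH[of A ws] by (cases p) (auto intro!: ex_snoc_Cons)
  next
    case (C1 A B) then show ?thesis using Cons.prems Cons.IH[of B ws] by (cases p) (auto intro!: ex_snoc_Cons)
  next
    case (D0 A B) then show ?thesis using Cons.prems Cons.IH[of A ws] by (cases p) (auto intro!: ex_snoc_Cons)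
  next
    case (D1 A B) then show ?thesis using Cons.prems Cons.IH[of B ws] by (cases p) (auto intro!: ex_snoc_Cons)
  next
    case (B A) then show ?thesis using Cons by (cases ws; cases p) fastforce+
  next
    case (Q A) then show ?thesis using Cons by (cases ws; cases p) fastforce+
  qed
qed

lemma height_le_faddr:
  "sub F p \<noteq> None \<Longrightarrow> length ws = mdepth F p \<Longrightarrow> height ws \<le> length (faddr F p ws)"
proof (induction p arbitrary: F ws)
  case Nil then show ?case by (simp add: height_def)
next
  case (Cons x p)
  from Cons.prems(1) show ?case
  proof (cases rule: sub_Cons_E)
    case (B A) then show ?thesis using Cons by (cases ws) (fastforce simp: height_def)+
  next
    case (Q A) then show ?thesis using Cons by (cases ws) (fastforce simp: height_def)+
  next
    case (C0 A B) then show ?thesis using Cons.prems Cons.IH[of A ws] by auto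
  next
    case (C1 A B) then show ?thesis using Cons.prems Cons.IH[of B ws] by auto
  next
    case (D0 A B) then show ?thesis using Cons.prems Cons.IH[of A ws] by auto
  next
    case (D1 A B) then show ?thesis using Cons.prems Cons.IH[of B ws] by auto
  qed
qed

lemma split_first:
  assumes "u @ c # r = u' @ c # r'" "c \<notin> set u" "c \<notin> set u'"
  shows "u = u' \<and> r = r'"
proof -
  have "takeWhile (\<lambda>x. x \<noteq> c) (u @ c # r) = takeWhile (\<lambda>x. x \<noteq> c) (u' @ c # r')" using assms(1) by simp
  then have "u = u'" using assms(2,3) by (subst (asm) (1 2) takeWhile_append2) auto
  then show ?thesis using assms(1) by simp
qed

lemma bchar_nodot: "CHR ''.'' \<notin> set (map bchar w)"
  by (auto simp: bchar_def)

lemma map_bchar_inj: "map bchar w = map bchar w' \<Longrightarrow> w = w'"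
proof -
  have "inj bchar" by (auto simp: inj_def bchar_def split: if_splits)
  then show "map bchar w = map bchar w' \<Longrightarrow> w = w'" by (simp add: inj_map_eq_map)
qed

lemma faddr_inj:
  "sub F p \<noteq> None \<Longrightarrow> length ws = mdepth F p \<Longrightarrow>
   sub F p' \<noteq> None \<Longrightarrow> length ws' = mdepth F p' \<Longrightarrow>
   faddr F p ws = faddr F p' ws' \<Longrightarrow> p = p' \<and> ws = ws'"
proof (induction p arbitrary: F ws p' ws')
  case Nil
  then show ?case using faddr_dot[of F p' ws'] by (cases p') auto
next
  case (Cons x p)
  show ?case
  proof (cases p')
    case Nil
    then show ?thesis using Cons.prems faddr_dot[of F "x#p" ws] by auto
  next
    case (Cons x' q)
    note pq = Cons
    from Cons.prems(1) show ?thesis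
    proof (cases rule: sub_Cons_E)
      case (C0 A B)
      from Cons.prems(3)[unfolded pq] show ?thesis
      proof (cases rule: sub_Cons_E)
        case (C0 A' B') then show ?thesis using Cons.prems Cons.IH[of A ws q ws'] \<open>F = Conj A B\<close> \<open>x = 0\<close> pq by auto
      qed (use C0 Cons.prems pq in auto)
    next
      case (C1 A B)
      from Cons.prems(3)[unfolded pq] show ?thesis
      proof (cases rule: sub_Cons_E)
        case (C1 A' B') then show ?thesis using Cons.prems Cons.IH[of B ws q ws'] \<open>F = Conj A B\<close> \<open>x = 1\<close> pq by auto
      qed (use C1 Cons.prems pq in auto)
    next
      case (D0 A B)
      from Cons.prems(3)[unfolded pq] show ?thesis
      proof (cases rule: sub_Cons_E)
        case (D0 A' B') then show ?thesis using Cons.prems Cons.IH[of A ws q ws'] \<open>F = Disj A B\<close> \<open>x = 0\<close> pq by auto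
      qed (use D0 Cons.prems pq in auto)
    next
      case (D1 A B)
      from Cons.prems(3)[unfolded pq] show ?thesis
      proof (cases rule: sub_Cons_E)
        case (D1 A' B') then show ?thesis using Cons.prems Cons.IH[of B ws q ws'] \<open>F = Disj A B\<close> \<open>x = 1\<close> pq by auto
      qed (use D1 Cons.prems pq in auto)
    next
      case (B A)
      from Cons.prems(3)[unfolded pq] B have x': "x' = 0" by (cases rule: sub_Cons_E) auto
      obtain w v where ws: "ws = w # v" using Cons.prems(2) B by (cases ws) auto
      obtain w' v' where ws': "ws' = w' # v'" using Cons.prems(4) B pq x' by (cases ws') auto
      have "map bchar w @ CHR ''.'' # faddr A p v = map bchar w' @ CHR ''.'' # faddr A q v'"
        using Cons.prems(5) B ws ws' pq x' by simp
      from split_first[OF this bchar_nodot bchar_nodot]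
      have "w = w'" "faddr A p v = faddr A q v'" using map_bchar_inj by auto
      then show ?thesis using Cons.IH[of A v q v'] Cons.prems B ws ws' pq x' by auto
    next
      case (Q A)
      from Cons.prems(3)[unfolded pq] Q have x': "x' = 0" by (cases rule: sub_Cons_E) auto
      obtain w v where ws: "ws = w # v" using Cons.prems(2) Q by (cases ws) auto
      obtain w' v' where ws': "ws' = w' # v'" using Cons.prems(4) Q pq x' by (cases ws') auto
      have "map bchar w @ CHR ''.'' # faddr A p v = map bchar w' @ CHR ''.'' # faddr A q v'"
        using Cons.prems(5) Q ws ws' pq x' by simp
      from split_first[OF this bchar_nodot bchar_nodot]
      have "w = w'" "faddr A p v = faddr A q v'" using map_bchar_inj by auto
      then show ?thesis using Cons.IH[of A v q v'] Cons.prems Q ws ws' pq x' by auto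
    qed
  qed
qed

lemma addr_split: "politeral_funit F f \<Longrightarrow> addr F f = [] \<or> (\<exists>s. addr F f = s @ [CHR ''.''])"
  unfolding politeral_funit_def is_funit_def is_occ_def addr_def
  using faddr_dot[of F "fst f" "snd f"] by (cases "fst f = []") auto

lemma parse_num:
  assumes "politeral_funit F f" "politeral_funit F g" "addr F f @ dec a = addr F g @ dec b"
  shows "a = b"
proof -
  have "dec a = dec b"
    using addr_split[OF assms(1)] addr_split[OF assms(2)] assms(3) dec_nodot[of a] dec_nodot[of b]
    apply (elim disjE exE)
    apply simp
    apply (metis Un_iff append.assoc append_Cons append_Nil in_set_conv_decomp set_append)
    apply (metis Un_iff append.assoc append_Cons append_Nil in_set_conv_decomp set_append)
    apply (metis append.assoc append_Cons append_Nil split_last_dot)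
    done
  then show ?thesis by (rule dec_inj)
qed

definition restr :: "bool list list \<Rightarrow> ibits list \<Rightarrow> bool" where
  "restr ws ys \<longleftrightarrow> list_all2 (\<lambda>w y. w = map y [0..<length w]) ws ys"

lemma proj_pref_Some: "proj_pref \<alpha> \<Theta> n = Some (q, s) \<longleftrightarrow> \<Theta> n = Some (q, \<alpha> @ s)"
  unfolding proj_pref_def
  by (cases "\<Theta> n") (auto split: if_splits, metis append_take_drop_id)

lemma proj_inf_Some:
  "proj_inf y \<Theta> n = Some (q, s) \<longleftrightarrow> (\<exists>k. \<Theta> n = Some (q, map bchar (map y [0..<k]) @ CHR ''.'' # s))"
proof
  assume a: "proj_inf y \<Theta> n = Some (q, s)"
  obtain q' m where m0: "\<Theta> n = Some (q', m)" using a unfolding proj_inf_def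
    by (cases "\<Theta> n") auto
  have "q' = q" using a unfolding proj_inf_def m0 by (simp add: Let_def split: if_splits)
  then have m: "\<Theta> n = Some (q, m)" using m0 by simp
  define k where "k = length (takeWhile (\<lambda>c. c \<noteq> CHR ''.'') m)"
  have e: "proj_inf y \<Theta> n = (if k < length m \<and> take k m = map bchar (map y [0..<k]) then Some (q, drop (Suc k) m) else None)"
    unfolding proj_inf_def m k_def by (simp only: Let_def option.case prod.case)
  have h: "k < length m" "take k m = map bchar (map y [0..<k])" "s = drop (Suc k) m"
    using a unfolding e by (simp_all split: if_splits)
  have "m ! k = CHR ''.''" using h(1) nth_length_takeWhile[of "\<lambda>c. c \<noteq> CHR ''.''" m] unfolding k_def by blast
  then have "m = take k m @ CHR ''.'' # drop (Suc k) m" using h(1)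
    using Cons_nth_drop_Suc[OF h(1)] append_take_drop_id[of k m] by simp
  then have "m = map bchar (map y [0..<k]) @ CHR ''.'' # s" using h(2,3) by simp
  then show "\<exists>k. \<Theta> n = Some (q, map bchar (map y [0..<k]) @ CHR ''.'' # s)" using m by blast
next
  assume "\<exists>k. \<Theta> n = Some (q, map bchar (map y [0..<k]) @ CHR ''.'' # s)"
  then obtain k where k: "\<Theta> n = Some (q, map bchar (map y [0..<k]) @ CHR ''.'' # s)" by blast
  have tw: "takeWhile (\<lambda>c. c \<noteq> CHR ''.'') (map bchar (map y [0..<k]) @ CHR ''.'' # s) = map bchar (map y [0..<k])"
    using bchar_nodot[of "map y [0..<k]"] by (subst takeWhile_append2) (auto simp: bchar_def)
  show "proj_inf y \<Theta> n = Some (q, s)" unfolding proj_inf_def k using tw by (simp add: Let_def)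
qed

lemma pref_step:
  assumes IH: "proj A p ys (proj_pref \<alpha> \<Theta>) n = Some (q, r) \<longleftrightarrow> (\<exists>ws. restr ws ys \<and> proj_pref \<alpha> \<Theta> n = Some (q, faddr A p ws @ r))"
    and e1: "proj F (x#p) ys \<Theta> = proj A p ys (proj_pref \<alpha> \<Theta>)"
    and e2: "\<And>ws. faddr F (x#p) ws = \<alpha> @ faddr A p ws"
  shows "proj F (x#p) ys \<Theta> n = Some (q, r) \<longleftrightarrow> (\<exists>ws. restr ws ys \<and> \<Theta> n = Some (q, faddr F (x#p) ws @ r))"
  unfolding e1 e2 IH proj_pref_Some by simp

lemma proj_char:
  "sub F p \<noteq> None \<Longrightarrow> length ys = mdepth F p \<Longrightarrow>
   proj F p ys \<Theta> n = Some (q, r) \<longleftrightarrow> (\<exists>ws. restr ws ys \<and> \<Theta> n = Some (q, faddr F p ws @ r))"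
proof (induction p arbitrary: F ys \<Theta>)
  case Nil then show ?case by (simp add: restr_def)
next
  case (Cons x p)
  from Cons.prems(1) show ?case
  proof (cases rule: sub_Cons_E)
    case (C0 A B) show ?thesis
      by (rule pref_step[where \<alpha>="''0.''" and A=A, OF Cons.IH]) (use Cons.prems C0 in auto)
  next
    case (C1 A B) show ?thesis
      by (rule pref_step[where \<alpha>="''1.''" and A=B, OF Cons.IH]) (use Cons.prems C1 in auto)
  next
    case (D0 A B) show ?thesis
      by (rule pref_step[where \<alpha>="''0.''" and A=A, OF Cons.IH]) (use Cons.prems D0 in auto)
  next
    case (D1 A B) show ?thesis
      by (rule pref_step[where \<alpha>="''1.''" and A=B, OF Cons.IH]) (use Cons.prems D1 in auto)
  next
    case (B A)
    obtain y v where ys: "ys = y # v" using Cons.prems(2) B by (cases ys) auto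
    have "proj F (x#p) ys \<Theta> n = proj A p v (proj_inf y \<Theta>) n" using B ys by simp
    also have "\<dots> = Some (q, r) \<longleftrightarrow> (\<exists>ws. restr ws v \<and> proj_inf y \<Theta> n = Some (q, faddr A p ws @ r))"
      using Cons.IH[of A v] Cons.prems B ys by simp
    also have "\<dots> \<longleftrightarrow> (\<exists>ws. restr ws ys \<and> \<Theta> n = Some (q, faddr F (x#p) ws @ r))"
    proof
      assume "\<exists>ws. restr ws v \<and> proj_inf y \<Theta> n = Some (q, faddr A p ws @ r)"
      then obtain ws k where "restr ws v" "\<Theta> n = Some (q, map bchar (map y [0..<k]) @ CHR ''.'' # faddr A p ws @ r)"
        unfolding proj_inf_Some by blast
      then show "\<exists>ws. restr ws ys \<and> \<Theta> n = Some (q, faddr F (x#p) ws @ r)"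
        using B ys by (intro exI[of _ "map y [0..<k] # ws"]) (simp add: restr_def)
    next
      assume "\<exists>ws. restr ws ys \<and> \<Theta> n = Some (q, faddr F (x#p) ws @ r)"
      then obtain ws0 where r0: "restr ws0 ys" "\<Theta> n = Some (q, faddr F (x#p) ws0 @ r)" by blast
      from r0(1) obtain w ws where r2: "ws0 = w # ws" "w = map y [0..<length w]" "list_all2 (\<lambda>w y. w = map y [0..<length w]) ws v"
        unfolding restr_def ys list_all2_Cons2 by blast
      have r1: "restr ws v" "\<Theta> n = Some (q, faddr F (x#p) (w#ws) @ r)"
        using r2(3) r0(2) r2(1) unfolding restr_def by simp_all
      obtain k where wk: "w = map y [0..<k]" using r2(2) by blast
      have "\<Theta> n = Some (q, map bchar (map y [0..<k]) @ CHR ''.'' # faddr A p ws @ r)"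
        using r1(2) B wk by simp
      then show "\<exists>ws. restr ws v \<and> proj_inf y \<Theta> n = Some (q, faddr A p ws @ r)"
        using r1(1) unfolding proj_inf_Some by blast
    qed
    finally show ?thesis .
  next
    case (Q A)
    obtain y v where ys: "ys = y # v" using Cons.prems(2) Q by (cases ys) auto
    have "proj F (x#p) ys \<Theta> n = proj A p v (proj_inf y \<Theta>) n" using Q ys by simp
    also have "\<dots> = Some (q, r) \<longleftrightarrow> (\<exists>ws. restr ws v \<and> proj_inf y \<Theta> n = Some (q, faddr A p ws @ r))"
      using Cons.IH[of A v] Cons.prems Q ys by simp
    also have "\<dots> \<longleftrightarrow> (\<exists>ws. restr ws ys \<and> \<Theta> n = Some (q, faddr F (x#p) ws @ r))"
    proof
      assume "\<exists>ws. restr ws v \<and> proj_inf y \<Theta> n = Some (q, faddr A p ws @ r)"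
      then obtain ws k where "restr ws v" "\<Theta> n = Some (q, map bchar (map y [0..<k]) @ CHR ''.'' # faddr A p ws @ r)"
        unfolding proj_inf_Some by blast
      then show "\<exists>ws. restr ws ys \<and> \<Theta> n = Some (q, faddr F (x#p) ws @ r)"
        using Q ys by (intro exI[of _ "map y [0..<k] # ws"]) (simp add: restr_def)
    next
      assume "\<exists>ws. restr ws ys \<and> \<Theta> n = Some (q, faddr F (x#p) ws @ r)"
      then obtain ws0 where r0: "restr ws0 ys" "\<Theta> n = Some (q, faddr F (x#p) ws0 @ r)" by blast
      from r0(1) obtain w ws where r2: "ws0 = w # ws" "w = map y [0..<length w]" "list_all2 (\<lambda>w y. w = map y [0..<length w]) ws v"
        unfolding restr_def ys list_all2_Cons2 by blast
      have r1: "restr ws v" "\<Theta> n = Some (q, faddr F (x#p) (w#ws) @ r)"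
        using r2(3) r0(2) r2(1) unfolding restr_def by simp_all
      obtain k where wk: "w = map y [0..<k]" using r2(2) by blast
      have "\<Theta> n = Some (q, map bchar (map y [0..<k]) @ CHR ''.'' # faddr A p ws @ r)"
        using r1(2) Q wk by simp
      then show "\<exists>ws. restr ws v \<and> proj_inf y \<Theta> n = Some (q, faddr A p ws @ r)"
        using r1(1) unfolding proj_inf_Some by blast
    qed
    finally show ?thesis .
  qed
qed

declare dec.simps[simp del]


lemma finite_occ: "finite {p. sub F p \<noteq> None}"
proof (induction F)
  case (Lit b a)
  have "{p. sub (Lit b a) p \<noteq> None} \<subseteq> {[]}"
  proof
    fix p assume "p \<in> {p. sub (Lit b a) p \<noteq> None}"
    then show "p \<in> {[]}" by (cases p) auto
  qed
  then show ?case by (rule finite_subset) simp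
next
  case (Conj A B)
  have "{p. sub (Conj A B) p \<noteq> None} \<subseteq> insert [] ((Cons 0) ` {p. sub A p \<noteq> None} \<union> (Cons 1) ` {p. sub B p \<noteq> None})"
  proof
    fix p assume a: "p \<in> {p. sub (Conj A B) p \<noteq> None}"
    show "p \<in> insert [] ((Cons 0) ` {p. sub A p \<noteq> None} \<union> (Cons 1) ` {p. sub B p \<noteq> None})"
    proof (cases p)
      case (Cons x q)
      from a Cons have "sub (Conj A B) (x#q) \<noteq> None" by simp
      then show ?thesis by (cases rule: sub_Cons_E) (use Cons a in auto)
    qed simp
  qed
  then show ?case by (rule finite_subset) (use Conj in auto)
next
  case (Disj A B)
  have "{p. sub (Disj A B) p \<noteq> None} \<subseteq> insert [] ((Cons 0) ` {p. sub A p \<noteq> None} \<union> (Cons 1) ` {p. sub B p \<noteq> None})"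
  proof
    fix p assume a: "p \<in> {p. sub (Disj A B) p \<noteq> None}"
    show "p \<in> insert [] ((Cons 0) ` {p. sub A p \<noteq> None} \<union> (Cons 1) ` {p. sub B p \<noteq> None})"
    proof (cases p)
      case (Cons x q)
      from a Cons have "sub (Disj A B) (x#q) \<noteq> None" by simp
      then show ?thesis by (cases rule: sub_Cons_E) (use Cons a in auto)
    qed simp
  qed
  then show ?case by (rule finite_subset) (use Disj in auto)
next
  case (Bang A)
  have "{p. sub (Bang A) p \<noteq> None} \<subseteq> insert [] ((Cons 0) ` {p. sub A p \<noteq> None})"
  proof
    fix p assume a: "p \<in> {p. sub (Bang A) p \<noteq> None}"
    show "p \<in> insert [] ((Cons 0) ` {p. sub A p \<noteq> None})"
    proof (cases p)
      case (Cons x q)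
      from a Cons have "sub (Bang A) (x#q) \<noteq> None" by simp
      then show ?thesis by (cases rule: sub_Cons_E) (use Cons a in auto)
    qed simp
  qed
  then show ?case by (rule finite_subset) (use Bang in auto)
next
  case (Ques A)
  have "{p. sub (Ques A) p \<noteq> None} \<subseteq> insert [] ((Cons 0) ` {p. sub A p \<noteq> None})"
  proof
    fix p assume a: "p \<in> {p. sub (Ques A) p \<noteq> None}"
    show "p \<in> insert [] ((Cons 0) ` {p. sub A p \<noteq> None})"
    proof (cases p)
      case (Cons x q)
      from a Cons have "sub (Ques A) (x#q) \<noteq> None" by simp
      then show ?thesis by (cases rule: sub_Cons_E) (use Cons a in auto)
    qed simp
  qed
  then show ?case by (rule finite_subset) (use Ques in auto)
qed

lemma height_Cons: "height (w # ws) = max (length w) (height ws)"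
  by (simp add: height_def)

lemma height_le_mem: "w \<in> set ws \<Longrightarrow> length w \<le> height ws"
  by (induction ws) (auto simp: height_Cons)

lemma height_mem: "ws \<noteq> [] \<Longrightarrow> \<exists>w\<in>set ws. height ws = length w"
proof (induction ws)
  case Nil then show ?case by blast
next
  case (Cons v ws)
  show ?case
  proof (cases "ws = []")
    case True then show ?thesis by (simp add: height_def)
  next
    case False
    then obtain u where "u \<in> set ws" "height ws = length u" using Cons.IH by blast
    then show ?thesis by (cases "length v \<le> length u") (auto simp: height_Cons max_def)
  qed
qed

lemma height_regular: "regular ws \<Longrightarrow> w \<in> set ws \<Longrightarrow> height ws = length w"
proof -
  assume r: "regular ws" and w: "w \<in> set ws"
  then have "ws \<noteq> []" by auto
  then obtain u where "u \<in> set ws" "height ws = length u" using height_mem by blast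
  then show ?thesis using r w unfolding regular_def by metis
qed

lemma height_const: "\<forall>w\<in>set ws. length w = H \<Longrightarrow> ws \<noteq> [] \<Longrightarrow> height ws = H"
  by (metis height_regular regular_def list.set_intros(1) neq_Nil_conv)

lemma prompt_lengths: "is_prompt F \<Phi> f \<Longrightarrow> w \<in> set (snd f) \<Longrightarrow> length w = prompt_height F \<Phi>"
  unfolding is_prompt_def using height_regular by fastforce

lemma finite_prompts: "finite {f. is_prompt F \<Phi> f}"
proof -
  let ?H = "prompt_height F \<Phi>"
  have fw: "finite {w :: bool list. set w \<subseteq> UNIV \<and> length w = ?H}"
    by (rule finite_lists_length_eq) simp
  have "{f. is_prompt F \<Phi> f} \<subseteq> Sigma {p. sub F p \<noteq> None}
          (\<lambda>p. {ws. set ws \<subseteq> {w::bool list. set w \<subseteq> UNIV \<and> length w = ?H} \<and> length ws = mdepth F p})"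
    using prompt_lengths
    by (fastforce simp: is_prompt_def politeral_funit_def is_funit_def is_occ_def)
  moreover have "finite (Sigma {p. sub F p \<noteq> None}
          (\<lambda>p. {ws. set ws \<subseteq> {w::bool list. set w \<subseteq> UNIV \<and> length w = ?H} \<and> length ws = mdepth F p}))"
  proof (rule finite_SigmaI)
    show "finite {p. sub F p \<noteq> None}" by (rule finite_occ)
    fix p assume "p \<in> {p. sub F p \<noteq> None}"
    show "finite {ws. set ws \<subseteq> {w::bool list. set w \<subseteq> UNIV \<and> length w = ?H} \<and> length ws = mdepth F p}"
      by (rule finite_lists_length_eq) (rule fw)
  qed
  ultimately show ?thesis by (rule finite_subset)
qed

lemma set_prompt_addrs: "set (prompt_addrs F \<Phi>) = addr F ` {f. is_prompt F \<Phi> f}"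
  unfolding prompt_addrs_def by (rule set_sorted_list_of_set) (rule finite_imageI, rule finite_prompts)

lemma prompt_height_bound: "active F \<Phi> f \<Longrightarrow> height (snd f) < prompt_height F \<Phi>"
proof -
  let ?S = "sum_list (map (length \<circ> snd) \<Phi>)"
  have ex: "\<forall>f. active F \<Phi> f \<longrightarrow> height (snd f) < Suc ?S"
  proof (intro allI impI)
    fix f assume "active F \<Phi> f"
    then obtain q \<beta> where fu: "is_funit F f" and mem: "(q, addr F f @ \<beta>) \<in> set \<Phi>"
      unfolding active_def by blast
    have "height (snd f) \<le> length (addr F f)"
      using fu height_le_faddr[of F "fst f" "snd f"] unfolding is_funit_def is_occ_def addr_def by simp
    also have "\<dots> \<le> length (addr F f @ \<beta>)" by simp
    also have "\<dots> \<le> ?S"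
      using mem by (intro member_le_sum_list) (force)+
    finally show "height (snd f) < Suc ?S" by simp
  qed
  show "active F \<Phi> f \<Longrightarrow> height (snd f) < prompt_height F \<Phi>"
    unfolding prompt_height_def using LeastI_ex[of "\<lambda>h. \<forall>f. active F \<Phi> f \<longrightarrow> height (snd f) < h"] ex by blast
qed

lemma finite_used: "finite (used_nums F \<Phi>)"
proof -
  have sub1: "used_nums F \<Phi> \<subseteq> (\<Union>e\<in>set \<Phi>. {a. \<exists>f. politeral_funit F f \<and> snd e = addr F f @ dec a})"
    unfolding used_nums_def by force
  have fin1: "finite {a. \<exists>f. politeral_funit F f \<and> s = addr F f @ dec a}" for s
  proof (cases "\<exists>a. \<exists>f. politeral_funit F f \<and> s = addr F f @ dec a")
    case True
    then obtain a0 f0 where a0: "politeral_funit F f0" "s = addr F f0 @ dec a0" by blast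
    have "{a. \<exists>f. politeral_funit F f \<and> s = addr F f @ dec a} \<subseteq> {a0}"
    proof
      fix a assume "a \<in> {a. \<exists>f. politeral_funit F f \<and> s = addr F f @ dec a}"
      then obtain f where f: "politeral_funit F f" "s = addr F f @ dec a" by blast
      have "addr F f @ dec a = addr F f0 @ dec a0" using f(2) a0(2) by (rule trans[OF sym])
      then have "a = a0" by (rule parse_num[OF f(1) a0(1)])
      then show "a \<in> {a0}" by simp
    qed
    then show ?thesis by (rule finite_subset) (rule finite.insertI[OF finite.emptyI])
  next
    case False
    then have "{a. \<exists>f. politeral_funit F f \<and> s = addr F f @ dec a} = {}" by blast
    then show ?thesis by (simp only: finite.emptyI)
  qed
  have "finite (\<Union>e\<in>set \<Phi>. {a. \<exists>f. politeral_funit F f \<and> snd e = addr F f @ dec a})"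
    by (rule finite_UN_I) (rule finite_set, rule fin1)
  then show ?thesis by (rule finite_subset[OF sub1])
qed

lemma bm_append: "\<exists>xs. bot_moves F \<Phi> \<alpha>s = \<Phi> @ xs \<and> length xs = length \<alpha>s"
proof (induction \<alpha>s arbitrary: \<Phi>)
  case Nil then show ?case by simp
next
  case (Cons \<alpha> \<alpha>s)
  obtain xs where "bot_moves F (\<Phi> @ [(Bot, \<alpha> @ dec (LEAST a. a \<notin> used_nums F \<Phi>))]) \<alpha>s
     = (\<Phi> @ [(Bot, \<alpha> @ dec (LEAST a. a \<notin> used_nums F \<Phi>))]) @ xs \<and> length xs = length \<alpha>s"
    using Cons.IH by blast
  then show ?case by (intro exI[of _ "(Bot, \<alpha> @ dec (LEAST a. a \<notin> used_nums F \<Phi>)) # xs"]) simp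
qed

lemma bm_mem: "\<alpha> \<in> set \<alpha>s \<Longrightarrow> \<exists>c. (Bot, \<alpha> @ dec c) \<in> set (bot_moves F \<Phi> \<alpha>s)"
proof (induction \<alpha>s arbitrary: \<Phi>)
  case Nil then show ?case by simp
next
  case (Cons \<beta> \<alpha>s)
  show ?case
  proof (cases "\<alpha> = \<beta>")
    case True
    obtain xs where "bot_moves F (\<Phi> @ [(Bot, \<beta> @ dec (LEAST a. a \<notin> used_nums F \<Phi>))]) \<alpha>s
       = (\<Phi> @ [(Bot, \<beta> @ dec (LEAST a. a \<notin> used_nums F \<Phi>))]) @ xs"
      using bm_append by blast
    then show ?thesis using True by auto
  next
    case False
    then show ?thesis using Cons by auto
  qed
qed

definition INV :: "'a fmla \<Rightarrow> position \<Rightarrow> bool" where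
  "INV F \<Phi> \<longleftrightarrow> (\<forall>j<length \<Phi>. fst (\<Phi>!j) = Bot \<longrightarrow>
      (\<exists>h c. politeral_funit F h \<and> snd (\<Phi>!j) = addr F h @ dec c \<and> c \<notin> used_nums F (take j \<Phi>)))"

lemma INV_snoc:
  assumes "INV F \<Phi>"
    and "fst e = Bot \<Longrightarrow> \<exists>h c. politeral_funit F h \<and> snd e = addr F h @ dec c \<and> c \<notin> used_nums F \<Phi>"
  shows "INV F (\<Phi> @ [e])"
  unfolding INV_def
proof (intro allI impI)
  fix j assume j: "j < length (\<Phi> @ [e])" and b: "fst ((\<Phi> @ [e]) ! j) = Bot"
  show "\<exists>h c. politeral_funit F h \<and> snd ((\<Phi> @ [e]) ! j) = addr F h @ dec c \<and> c \<notin> used_nums F (take j (\<Phi> @ [e]))"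
  proof (cases "j < length \<Phi>")
    case True
    then show ?thesis using assms(1) b unfolding INV_def by (simp add: nth_append)
  next
    case False
    then have "j = length \<Phi>" using j by simp
    then show ?thesis using assms(2) b by simp
  qed
qed

lemma least_fresh: "(LEAST a. a \<notin> used_nums F \<Phi>) \<notin> used_nums F \<Phi>"
proof -
  have "\<exists>a. a \<notin> used_nums F \<Phi>" by (rule ex_new_if_finite[OF infinite_UNIV_nat finite_used])
  then show ?thesis by (rule LeastI_ex)
qed

lemma INV_bm: "INV F \<Phi> \<Longrightarrow> \<forall>\<alpha>\<in>set \<alpha>s. \<exists>h. politeral_funit F h \<and> \<alpha> = addr F h \<Longrightarrow> INV F (bot_moves F \<Phi> \<alpha>s)"
proof (induction \<alpha>s arbitrary: \<Phi>)
  case Nil then show ?case by simp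
next
  case (Cons \<alpha> \<alpha>s)
  obtain h where h: "politeral_funit F h" "\<alpha> = addr F h" using Cons.prems(2) by auto
  have "INV F (\<Phi> @ [(Bot, \<alpha> @ dec (LEAST a. a \<notin> used_nums F \<Phi>))])"
  proof (rule INV_snoc[OF Cons.prems(1)])
    show "\<exists>h' c. politeral_funit F h' \<and> snd (Bot, \<alpha> @ dec (LEAST a. a \<notin> used_nums F \<Phi>)) = addr F h' @ dec c \<and> c \<notin> used_nums F \<Phi>"
      using h(1) least_fresh[of F \<Phi>] h(2) by (intro exI[of _ h] exI[of _ "LEAST a. a \<notin> used_nums F \<Phi>"]) simp
  qed
  then show ?case using Cons.IH Cons.prems(2) by simp
qed

lemma pos_Suc: "pos_after F t (Suc k) =
   bot_moves F (pos_after F t k) (prompt_addrs F (pos_after F t k)) @ (case t k of None \<Rightarrow> [] | Some m \<Rightarrow> [(Top, m)])"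
  by (simp add: Let_def)

lemma INV_pos: "INV F (pos_after F t k)"
proof (induction k)
  case 0 then show ?case by (simp add: INV_def)
next
  case (Suc k)
  have "\<forall>\<alpha>\<in>set (prompt_addrs F (pos_after F t k)). \<exists>h. politeral_funit F h \<and> \<alpha> = addr F h"
    unfolding set_prompt_addrs is_prompt_def by blast
  then have I: "INV F (bot_moves F (pos_after F t k) (prompt_addrs F (pos_after F t k)))"
    by (rule INV_bm[OF Suc.IH])
  show ?case
  proof (cases "t k")
    case None then show ?thesis using I by (simp add: pos_Suc)
  next
    case (Some m)
    have "INV F (bot_moves F (pos_after F t k) (prompt_addrs F (pos_after F t k)) @ [(Top, m)])"
      by (rule INV_snoc[OF I]) simp
    then show ?thesis using Some by (simp add: pos_Suc)
  qed
qed

lemma uniq_num: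
  assumes "INV F \<Phi>" "n1 < length \<Phi>" "n2 < length \<Phi>"
    and "\<Phi>!n1 = (Bot, addr F f1 @ dec a)" "\<Phi>!n2 = (Bot, addr F f2 @ dec a)"
    and "politeral_funit F f1" "politeral_funit F f2"
  shows "n1 = n2"
proof -
  have key: "False" if tt: "m1 < m2" "m2 < length \<Phi>" "\<Phi>!m1 = (Bot, addr F g1 @ dec a)" "\<Phi>!m2 = (Bot, addr F g2 @ dec a)"
      "politeral_funit F g1" "politeral_funit F g2" for m1 m2 g1 g2
  proof -
    obtain h c where hc: "politeral_funit F h" "snd (\<Phi>!m2) = addr F h @ dec c" "c \<notin> used_nums F (take m2 \<Phi>)"
      using assms(1) tt(2,4) unfolding INV_def by fastforce
    have "addr F g2 @ dec a = addr F h @ dec c" using hc(2) tt(4) by simp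
    then have ac: "a = c" by (rule parse_num[OF tt(6) hc(1)])
    have "take m2 \<Phi> ! m1 = \<Phi> ! m1" using tt(1) by simp
    then have "(Bot, addr F g1 @ dec a) \<in> set (take m2 \<Phi>)"
      using tt(1,2,3) by (metis length_take min.absorb4 nth_mem)
    then have "a \<in> used_nums F (take m2 \<Phi>)" using tt(5) unfolding used_nums_def by blast
    then show False using hc(3) ac by simp
  qed
  show ?thesis
  proof (rule ccontr)
    assume "n1 \<noteq> n2"
    then consider "n1 < n2" | "n2 < n1" by linarith
    then show False
    proof cases
      case 1 then show False using key[of n1 n2 f1 f2] assms by blast
    next
      case 2 then show False using key[of n2 n1 f2 f1] assms by blast
    qed
  qed
qed

definition pf :: "'a fmla \<Rightarrow> position \<Rightarrow> path \<times> ibits list \<Rightarrow> path \<times> bool list list" where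
  "pf F \<Phi> M = (fst M, map (\<lambda>y. map y [0..<prompt_height F \<Phi>]) (snd M))"

lemma pf_funit: "politeral_unit F M \<Longrightarrow> politeral_funit F (pf F \<Phi> M)"
  unfolding politeral_unit_def politeral_funit_def is_unit_def is_funit_def pf_def by simp

lemma prompt_pf: "politeral_unit F M \<Longrightarrow> is_prompt F \<Phi> (pf F \<Phi> M)"
proof -
  assume M: "politeral_unit F M"
  have r: "regular (snd (pf F \<Phi> M))" unfolding regular_def pf_def by auto
  have h: "snd (pf F \<Phi> M) = [] \<or> height (snd (pf F \<Phi> M)) = prompt_height F \<Phi>"
  proof (cases "snd (pf F \<Phi> M) = []")
    case False
    then show ?thesis by (intro disjI2 height_const) (auto simp: pf_def)
  qed simp
  show ?thesis unfolding is_prompt_def using pf_funit[OF M] r h by blast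
qed

lemma restr_pf: "restr (snd (pf F \<Phi> M)) (snd M)"
  unfolding restr_def pf_def by (induction "snd M") (auto simp: list_all2_map1 list_all2_refl)

lemma round_move: "politeral_unit F M \<Longrightarrow>
   \<exists>c. (Bot, addr F (pf F (pos_after F t k) M) @ dec c) \<in> set (pos_after F t (Suc k))"
proof -
  assume M: "politeral_unit F M"
  let ?\<Phi> = "pos_after F t k"
  have "addr F (pf F ?\<Phi> M) \<in> set (prompt_addrs F ?\<Phi>)"
    unfolding set_prompt_addrs using prompt_pf[OF M] by blast
  then obtain c where "(Bot, addr F (pf F ?\<Phi> M) @ dec c) \<in> set (bot_moves F ?\<Phi> (prompt_addrs F ?\<Phi>))"
    using bm_mem by blast
  then show ?thesis unfolding pos_Suc by auto
qed

lemma len_grow: "politeral_unit F M \<Longrightarrow> length (pos_after F t k) < length (pos_after F t (Suc k))"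
proof -
  assume M: "politeral_unit F M"
  let ?\<Phi> = "pos_after F t k"
  have "addr F (pf F ?\<Phi> M) \<in> set (prompt_addrs F ?\<Phi>)"
    unfolding set_prompt_addrs using prompt_pf[OF M] by blast
  then have "prompt_addrs F ?\<Phi> \<noteq> []" by auto
  moreover obtain xs where "bot_moves F ?\<Phi> (prompt_addrs F ?\<Phi>) = ?\<Phi> @ xs" "length xs = length (prompt_addrs F ?\<Phi>)"
    using bm_append by blast
  ultimately show ?thesis unfolding pos_Suc by simp
qed

lemma len_ge: "politeral_unit F M \<Longrightarrow> k \<le> length (pos_after F t k)"
proof (induction k)
  case (Suc k) then show ?case using len_grow[OF Suc.prems, of t k] by simp
qed simp

lemma H_grow: "politeral_unit F M \<Longrightarrow> snd M \<noteq> [] \<Longrightarrow>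
   prompt_height F (pos_after F t k) < prompt_height F (pos_after F t (Suc k))"
proof -
  assume M: "politeral_unit F M" and ne: "snd M \<noteq> []"
  let ?\<Phi> = "pos_after F t k"
  obtain c where c: "(Bot, addr F (pf F ?\<Phi> M) @ dec c) \<in> set (pos_after F t (Suc k))"
    using round_move[OF M] by blast
  have "active F (pos_after F t (Suc k)) (pf F ?\<Phi> M)"
    unfolding active_def using pf_funit[OF M] c unfolding politeral_funit_def by blast
  then have "height (snd (pf F ?\<Phi> M)) < prompt_height F (pos_after F t (Suc k))"
    by (rule prompt_height_bound)
  moreover have "height (snd (pf F ?\<Phi> M)) = prompt_height F ?\<Phi>"
    using ne by (intro height_const) (auto simp: pf_def)
  ultimately show ?thesis by simp
qed

lemma H_ge: "politeral_unit F M \<Longrightarrow> snd M \<noteq> [] \<Longrightarrow> k \<le> prompt_height F (pos_after F t k)"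
proof (induction k)
  case (Suc k) then show ?case using H_grow[OF Suc.prems, of t k] by simp
qed simp

theorem lemma7p1:
  fixes F0 :: "'a fmla" and \<Omega> :: "nat \<Rightarrow> labmove"
  assumes "generated_run F0 \<Omega>" and "legal_run F0 \<Omega>"
    and "politeral_unit F0 L"
  shows "\<forall>M M'. opposite F0 \<Omega> L M \<and> opposite F0 \<Omega> L M' \<longrightarrow> M = M'"
proof (intro allI impI)
  fix M M' assume opp: "opposite F0 \<Omega> L M \<and> opposite F0 \<Omega> L M'"
  have uM: "politeral_unit F0 M" and uM': "politeral_unit F0 M'"
    using opp unfolding opposite_def by auto
  have eqB: "moves_of Bot (unit_proj F0 \<Omega> M) = moves_of Bot (unit_proj F0 \<Omega> M')"
  proof -
    have "moves_of Top (unit_proj F0 \<Omega> L) = moves_of (neg_player Top) (unit_proj F0 \<Omega> M)"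
      using opp unfolding opposite_def by blast
    moreover have "moves_of Top (unit_proj F0 \<Omega> L) = moves_of (neg_player Top) (unit_proj F0 \<Omega> M')"
      using opp unfolding opposite_def by blast
    ultimately show ?thesis by simp
  qed
  obtain t where gen: "\<And>k n. n < length (pos_after F0 t k) \<Longrightarrow> \<Omega> n = pos_after F0 t k ! n"
    using assms(1) unfolding generated_run_def by blast
  obtain p ys where Mp: "M = (p, ys)" by (cases M)
  obtain p' ys' where Mp': "M' = (p', ys')" by (cases M')
  have occ: "sub F0 p \<noteq> None" "length ys = mdepth F0 p"
    using uM Mp unfolding politeral_unit_def is_unit_def is_occ_def by auto
  have occ': "sub F0 p' \<noteq> None" "length ys' = mdepth F0 p'" "is_politeral F0 p'"
    using uM' Mp' unfolding politeral_unit_def is_unit_def is_occ_def by auto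
  show "M = M'"
  proof (rule ccontr)
    assume ne: "M \<noteq> M'"
    have "\<exists>k. p \<noteq> p' \<or> \<not> restr (snd (pf F0 (pos_after F0 t k) M)) ys'"
    proof (cases "p = p'")
      case False then show ?thesis by blast
    next
      case True
      then have "ys \<noteq> ys'" using ne Mp Mp' by simp
      moreover have "length ys = length ys'" using occ occ' True by simp
      ultimately obtain i where i: "i < length ys" "ys ! i \<noteq> ys' ! i"
        by (meson nth_equalityI)
      then obtain j where j: "(ys ! i) j \<noteq> (ys' ! i) j" by blast
      have sne: "snd M \<noteq> []" using i Mp by auto
      let ?H = "prompt_height F0 (pos_after F0 t (Suc j))"
      have Hj: "Suc j \<le> ?H" by (rule H_ge[OF uM sne])
      have "\<not> restr (snd (pf F0 (pos_after F0 t (Suc j)) M)) ys'"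
      proof
        assume r: "restr (snd (pf F0 (pos_after F0 t (Suc j)) M)) ys'"
        have "list_all2 (\<lambda>w y. w = map y [0..<length w]) (map (\<lambda>y. map y [0..<?H]) ys) ys'"
          using r Mp unfolding restr_def pf_def by simp
        then have "map (ys ! i) [0..<?H] = map (ys' ! i) [0..<?H]"
          using i(1) by (auto dest: list_all2_nthD)
        then have "(ys ! i) j = (ys' ! i) j" using Hj
          by (metis (no_types, lifting) Suc_le_eq diff_zero length_upt nth_map nth_upt plus_nat.add_0)
        then show False using j by simp
      qed
      then show ?thesis by blast
    qed
    then obtain k where kk: "p \<noteq> p' \<or> \<not> restr (snd (pf F0 (pos_after F0 t k) M)) ys'" by blast
    define f where "f = pf F0 (pos_after F0 t k) M"
    have fp: "fst f = p" using Mp unfolding f_def pf_def by simp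
    obtain c where c: "(Bot, addr F0 f @ dec c) \<in> set (pos_after F0 t (Suc k))"
      using round_move[OF uM] unfolding f_def by blast
    then obtain i0 where i0: "i0 < length (pos_after F0 t (Suc k))" "pos_after F0 t (Suc k) ! i0 = (Bot, addr F0 f @ dec c)"
      by (metis in_set_conv_nth)
    have Oi0: "\<Omega> i0 = (Bot, addr F0 f @ dec c)" using gen[OF i0(1)] i0(2) by simp
    have "proj F0 p ys (\<lambda>n. Some (\<Omega> n)) i0 = Some (Bot, dec c)"
    proof (subst proj_char[OF occ])
      show "\<exists>ws. restr ws ys \<and> Some (\<Omega> i0) = Some (Bot, faddr F0 p ws @ dec c)"
        using restr_pf[of F0 "pos_after F0 t k" M] Oi0 Mp fp unfolding f_def addr_def
        by (intro exI[of _ "snd (pf F0 (pos_after F0 t k) M)"]) (simp add: f_def[symmetric])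
    qed
    then have "dec c \<in> moves_of Bot (unit_proj F0 \<Omega> M)"
      unfolding moves_of_def unit_proj_def Mp by auto
    then have "dec c \<in> moves_of Bot (unit_proj F0 \<Omega> M')" using eqB by simp
    then obtain n' where "proj F0 p' ys' (\<lambda>n. Some (\<Omega> n)) n' = Some (Bot, dec c)"
      unfolding moves_of_def unit_proj_def Mp' by auto
    then obtain ws' where ws': "restr ws' ys'" "\<Omega> n' = (Bot, faddr F0 p' ws' @ dec c)"
      unfolding proj_char[OF occ'(1,2)] by auto
    have lws': "length ws' = mdepth F0 p'" using ws'(1) occ'(2) unfolding restr_def
      by (simp add: list_all2_lengthD)
    have g: "politeral_funit F0 (p', ws')"
      using occ' lws' unfolding politeral_funit_def is_funit_def is_occ_def by simp
    have ff: "politeral_funit F0 f" unfolding f_def by (rule pf_funit[OF uM])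
    define K where "K = Suc (i0 + n')"
    have lK: "K \<le> length (pos_after F0 t K)" by (rule len_ge[OF uM])
    have a1: "i0 < length (pos_after F0 t K)" "n' < length (pos_after F0 t K)" using lK K_def by auto
    have b1: "pos_after F0 t K ! i0 = (Bot, addr F0 f @ dec c)" using gen[OF a1(1)] Oi0 by simp
    have b2: "pos_after F0 t K ! n' = (Bot, addr F0 (p', ws') @ dec c)" using gen[OF a1(2)] ws'(2)
      by (simp add: addr_def)
    have "i0 = n'" by (rule uniq_num[OF INV_pos a1 b1 b2 ff g])
    then have "addr F0 f @ dec c = addr F0 (p', ws') @ dec c" using Oi0 ws'(2) by (simp add: addr_def)
    then have "faddr F0 p (snd f) = faddr F0 p' ws'" using fp by (simp add: addr_def)
    moreover have "length (snd f) = mdepth F0 p" using ff fp unfolding politeral_funit_def is_funit_def by simp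
    ultimately have "p = p' \<and> snd f = ws'"
      using faddr_inj[OF occ(1) _ occ'(1) lws'] by blast
    then show False using kk ws'(1) unfolding f_def by auto
  qed
qed

end
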